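(* Let $k$, $d$ and $n$ be positive integers such that $k \ge 6$ is even, $d \ge 2$, and $n \ge\frac{d+1}{8}(k^2-2sk+4s-4) + 1$, where $s \in \{0,1\}$ with $s \equiv \frac{k-2}{2} \pmod 2$. Then, for any function $f:[n] \rightarrow \{-1,1\}$ such that $|f([n])| \le \frac{d-1}{d+1}n$, there exists a $(d,k)$-block $A\subseteq[n]$ with $f(A)=0$.
   Context: $[n]=\{1,\dots,n\}$; $f(Y)=\sum_{y\in Y}f(y)$. A $(d,k)$-block in $[n]$ is a set $\{a_1,\dots,a_k\}\subseteq[n]$ of integers with $a_1<a_2<\dots<a_k$ and $a_{i+1}-a_i\le d$ for all $1\le i\le k-1$. *)

theory Defs
  imports Complex_Main
begin

definition dk_block :: "nat \<Rightarrow> nat \<Rightarrow> nat set \<Rightarrow> bool" where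
  "dk_block d k A \<longleftrightarrow>
     (\<exists>xs. sorted_wrt (<) xs \<and> length xs = k \<and> set xs = A \<and>
           (\<forall>i. i + 1 < k \<longrightarrow> xs ! (i + 1) - xs ! i \<le> d))"

end

theory Submission
  imports Defs
begin


definition gapok :: "nat \<Rightarrow> nat set \<Rightarrow> bool" where
  "gapok d S \<longleftrightarrow> (\<forall>x\<in>S. (\<exists>y\<in>S. x < y) \<longrightarrow> (\<exists>y\<in>S. x < y \<and> y \<le> x + d))"

lemma gapok_dk:
  assumes "finite S" "gapok d S"
  shows "dk_block d (card S) S"
proof -
  obtain xs where xs: "sorted_wrt (<) xs" "set xs = S" "length xs = card S"
    using finite_set_strict_sorted[OF assms(1)] by blast
  have sw: "sorted_wrt (<) xs" using xs(1) by simp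
  have "xs ! (i + 1) - xs ! i \<le> d" if i: "i + 1 < card S" for i
  proof -
    have lt: "xs ! i < xs ! (i+1)" using sorted_wrt_nth_less[OF sw, of i "i+1"] i xs(3) by simp
    have inS: "xs ! i \<in> S" "xs ! (i+1) \<in> S" using i xs(2,3) nth_mem by (metis Suc_eq_plus1 Suc_lessD)+
    then obtain y where y: "y \<in> S" "xs ! i < y" "y \<le> xs ! i + d"
      using assms(2) lt unfolding gapok_def by blast
    then obtain j where j: "j < length xs" "xs ! j = y" using xs(2) by (metis in_set_conv_nth)
    have "i < j"
    proof (rule ccontr)
      assume "\<not> i < j"
      then have "j = i \<or> j < i" by auto
      then have "xs ! j \<le> xs ! i"
        using sorted_wrt_nth_less[OF sw, of j i] i xs(3) by auto
      then show False using j y by simp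
    qed
    then have "xs ! (i+1) \<le> xs ! j"
      using sorted_wrt_nth_less[OF sw, of "i+1" j] j by (cases "i+1 = j") auto
    then show ?thesis using j y by simp
  qed
  then show ?thesis unfolding dk_block_def using sw xs by blast
qed

lemma gapok_remove_max:
  assumes "finite S" "gapok d S"
  shows "gapok d (S - {Max S})"
  unfolding gapok_def
proof (intro ballI impI)
  fix x assume x: "x \<in> S - {Max S}" and ex: "\<exists>y\<in>S - {Max S}. x < y"
  then obtain z where z: "z \<in> S - {Max S}" "x < z" by blast
  obtain y where y: "y \<in> S" "x < y" "y \<le> x + d" using assms(2) x z unfolding gapok_def by blast
  show "\<exists>y\<in>S - {Max S}. x < y \<and> y \<le> x + d"
  proof (cases "y = Max S")
    case True
    have "z \<le> Max S" using z assms(1) by simp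
    then show ?thesis using z y True by (intro bexI[of _ z]) auto
  next
    case False then show ?thesis using y by auto
  qed
qed

lemma gapok_insert_adj:
  assumes "gapok d S" "d \<ge> 1" "c + 1 \<in> S \<or> (c \<ge> 1 \<and> c - 1 \<in> S)"
  shows "gapok d (insert c S)"
proof (cases "c \<in> S")
  case True then show ?thesis using assms by (simp add: insert_absorb)
next
  case cS: False
  show ?thesis unfolding gapok_def
  proof (intro ballI impI)
    fix x assume x: "x \<in> insert c S" and ex: "\<exists>y\<in>insert c S. x < y"
    show "\<exists>y\<in>insert c S. x < y \<and> y \<le> x + d"
    proof (cases "x = c")
      case True
      show ?thesis
      proof (cases "c + 1 \<in> S")
        case True then show ?thesis using \<open>x = c\<close> assms(2) by auto
      next
        case False
        then have c1: "c \<ge> 1" "c - 1 \<in> S" using assms(3) by auto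
        obtain z where z: "z \<in> S" "c < z" using ex \<open>x = c\<close> by auto
        then have "\<exists>y\<in>S. c - 1 < y" using c1 by (intro bexI[of _ z]) auto
        then obtain w where w: "w \<in> S" "c - 1 < w" "w \<le> c - 1 + d"
          using assms(1) c1 unfolding gapok_def by blast
        have "w \<noteq> c" using w cS by auto
        then show ?thesis using w c1 \<open>x = c\<close> by (intro bexI[of _ w]) auto
      qed
    next
      case False
      then have xS: "x \<in> S" using x by auto
      show ?thesis
      proof (cases "\<exists>y\<in>S. x < y")
        case True
        then show ?thesis using assms(1) xS unfolding gapok_def by blast
      next
        case nf: False
        then have "x < c" using ex False by auto
        have "c + 1 \<notin> S" using nf \<open>x < c\<close> by auto
        then have "c - 1 \<in> S" "c \<ge> 1" using assms(3) by auto
        then have "x \<ge> c - 1" using nf by (metis not_le)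
        then show ?thesis using \<open>x < c\<close> assms(2) by (intro bexI[of _ c]) auto
      qed
    qed
  qed
qed

lemma adj_exists:
  fixes S :: "nat set" and U :: nat
  assumes "finite S" "S \<noteq> {}" "S \<subseteq> {1..U}" "\<not> {1..U} \<subseteq> S"
  shows "\<exists>c. 1 \<le> c \<and> c \<le> U \<and> c \<notin> S \<and> (c + 1 \<in> S \<or> (c \<ge> 1 \<and> c - 1 \<in> S))"
proof (cases "1 \<in> S")
  case True
  define Y where "Y = {1..U} - S"
  have Yne: "Y \<noteq> {}" using assms(4) unfolding Y_def by blast
  have Yf: "finite Y" unfolding Y_def by simp
  note Yne = Yne Yf
  define y where "y = Min Y"
  have yY: "y \<in> Y" using Yne Min_in y_def by blast
  then have "y \<noteq> 1" using True Y_def by auto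
  then have "y \<ge> 2" using yY Y_def by auto
  have "y - 1 \<notin> Y"
  proof
    assume "y - 1 \<in> Y"
    then have "y \<le> y - 1" using Min_le[OF Yne(2)] y_def by blast
    then show False using \<open>y \<ge> 2\<close> by simp
  qed
  then have "y - 1 \<in> S" using yY \<open>y \<ge> 2\<close> unfolding Y_def by auto
  then show ?thesis using yY \<open>y \<ge> 2\<close> unfolding Y_def by (intro exI[of _ y]) auto
next
  case False
  define a where "a = Min S"
  have aS: "a \<in> S" using assms(1,2) a_def by simp
  have a1: "a \<ge> 1" "a \<le> U" using aS assms(3) by auto
  have "a \<noteq> 1" using aS False by auto
  then have "a \<ge> 2" using a1 by simp
  have "a - 1 \<notin> S"
  proof
    assume "a - 1 \<in> S"
    then have "a \<le> a - 1" using Min_le[OF assms(1)] a_def by blast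
    then show False using \<open>a \<ge> 2\<close> by simp
  qed
  then show ?thesis using aS \<open>a \<ge> 2\<close> a1(2) by (intro exI[of _ "a - 1"]) auto
qed



lemma pad:
  fixes S :: "nat set"
  assumes "finite S" "S \<noteq> {}" "S \<subseteq> {1..n}" "gapok d S" "d \<ge> 1" "card S + j \<le> n"
  shows "\<exists>S'. S \<subseteq> S' \<and> S' \<subseteq> {1..n} \<and> gapok d S' \<and> card S' = card S + j"
  using assms
proof (induction j arbitrary: S)
  case 0 then show ?case by auto
next
  case (Suc j)
  have "\<not> {1..n} \<subseteq> S"
  proof
    assume "{1..n} \<subseteq> S"
    then have "card {1..n} \<le> card S" using card_mono[OF Suc.prems(1)] by blast
    then show False using Suc.prems(6) by simp
  qed
  then obtain c where c: "1 \<le> c" "c \<le> n" "c \<notin> S" "c + 1 \<in> S \<or> (c \<ge> 1 \<and> c - 1 \<in> S)"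
    using adj_exists[OF Suc.prems(1,2,3)] by blast
  have g: "gapok d (insert c S)" using gapok_insert_adj[OF Suc.prems(4,5) c(4)] .
  have cd: "card (insert c S) = card S + 1" using c(3) Suc.prems(1) by simp
  obtain S' where "insert c S \<subseteq> S'" "S' \<subseteq> {1..n}" "gapok d S'" "card S' = card (insert c S) + j"
    using Suc.IH[of "insert c S"] Suc.prems g c cd by auto
  then show ?case using cd by (intro exI[of _ S']) auto
qed

lemma path_step:
  fixes B :: "nat set"
  assumes "finite B" "B \<subseteq> {1..n}" "card B = k" "k \<ge> 2" "gapok d B" "B \<noteq> {1..k}" "d \<ge> 1"
  shows "\<exists>c M. M \<in> B \<and> c \<notin> B \<and> 1 \<le> c \<and> c < M \<and> gapok d (insert c (B - {M}))"
proof -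
  define M where "M = Max B"
  have Bne: "B \<noteq> {}" using assms(3,4) by auto
  have MB: "M \<in> B" using Bne assms(1) M_def by simp
  have leM: "\<And>x. x \<in> B \<Longrightarrow> x \<le> M" using assms(1) M_def by simp
  define A where "A = B - {M}"
  have cardA: "card A = k - 1" using MB assms(1,3) A_def by simp
  have Ane: "A \<noteq> {}" using cardA assms(4) by (cases "A = {}") auto
  have Asub: "A \<subseteq> {1..M - 1}"
  proof
    fix x assume "x \<in> A"
    then have "x \<in> B" "x \<noteq> M" using A_def by auto
    then show "x \<in> {1..M-1}" proof -
      have "x \<ge> 1" using \<open>x \<in> B\<close> assms(2) by auto
      moreover have "x < M" using leM[OF \<open>x \<in> B\<close>] \<open>x \<noteq> M\<close> by simp
      ultimately show ?thesis by simp
    qed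
  qed
  have nsub: "\<not> {1..M-1} \<subseteq> A"
  proof
    assume h: "{1..M-1} \<subseteq> A"
    have "B \<subseteq> {1..M}" using leM assms(2) by auto
    moreover have "{1..M} \<subseteq> B"
    proof
      fix x assume "x \<in> {1..M}"
      then have "x = M \<or> x \<in> {1..M-1}" by auto
      then show "x \<in> B" using h MB A_def by auto
    qed
    ultimately have BM: "B = {1..M}" by auto
    then have "M = k" using assms(3) by simp
    then show False using BM assms(6) by simp
  qed
  have fA: "finite A" using assms(1) A_def by simp
  obtain c where c: "1 \<le> c" "c \<le> M - 1" "c \<notin> A" "c + 1 \<in> A \<or> (c \<ge> 1 \<and> c - 1 \<in> A)"
    using adj_exists[OF fA Ane Asub nsub] by auto
  have gA: "gapok d A" unfolding A_def M_def by (rule gapok_remove_max[OF assms(1,5)])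
  have g: "gapok d (insert c A)" using gapok_insert_adj[OF gA assms(7) c(4)] .
  have cM: "c < M" using c(1,2) by simp
  have cB: "c \<notin> B" using c(3) cM unfolding A_def by auto
  show ?thesis
    apply (rule exI[of _ c], rule exI[of _ M])
    using MB cB c(1) cM g unfolding A_def by simp
qed

lemma sum_parity:
  fixes f :: "nat \<Rightarrow> int"
  assumes "finite A" "\<forall>a\<in>A. f a \<in> {-1, 1}"
  shows "even ((\<Sum>a\<in>A. f a) + int (card A))"
  using assms
proof (induction A rule: finite_induct)
  case empty then show ?case by simp
next
  case (insert x F)
  have e: "even ((\<Sum>a\<in>F. f a) + int (card F))" using insert by simp
  have "f x = -1 \<or> f x = 1" using insert.prems by simp
  then show ?case using insert.hyps e by (auto simp: algebra_simps)
qed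

lemma sum_count:
  fixes f :: "nat \<Rightarrow> int"
  assumes "finite A" "\<forall>a\<in>A. f a \<in> {-1, 1}"
  shows "(\<Sum>a\<in>A. f a) = int (card {a\<in>A. f a = 1}) - int (card {a\<in>A. f a = -1})
       \<and> card A = card {a\<in>A. f a = 1} + card {a\<in>A. f a = -1}"
  using assms
proof (induction A rule: finite_induct)
  case empty then show ?case by simp
next
  case (insert x F)
  have IH: "(\<Sum>a\<in>F. f a) = int (card {a\<in>F. f a = 1}) - int (card {a\<in>F. f a = -1})"
      "card F = card {a\<in>F. f a = 1} + card {a\<in>F. f a = -1}" using insert by auto
  have fin: "finite {a\<in>F. f a = 1}" "finite {a\<in>F. f a = -1}" using insert.hyps by auto
  have nx: "x \<notin> {a\<in>F. f a = 1}" "x \<notin> {a\<in>F. f a = -1}" using insert.hyps by auto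
  have "f x = -1 \<or> f x = 1" using insert.prems by simp
  then show ?case
  proof
    assume h: "f x = -1"
    have "{a \<in> insert x F. f a = 1} = {a\<in>F. f a = 1}" using h by auto
    moreover have "{a \<in> insert x F. f a = -1} = insert x {a\<in>F. f a = -1}" using h by auto
    ultimately show ?thesis using IH fin nx insert.hyps h by simp
  next
    assume h: "f x = 1"
    have "{a \<in> insert x F. f a = -1} = {a\<in>F. f a = -1}" using h by auto
    moreover have "{a \<in> insert x F. f a = 1} = insert x {a\<in>F. f a = 1}" using h by auto
    ultimately show ?thesis using IH fin nx insert.hyps h by simp
  qed
qed

lemma ivt:
  fixes f :: "nat \<Rightarrow> int"
  assumes "k \<ge> 2" "even k" "d \<ge> 1" "\<forall>i\<in>{1..n}. f i \<in> {-1, 1}" "k \<le> n"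
  shows "finite B \<Longrightarrow> B \<subseteq> {1..n} \<Longrightarrow> card B = k \<Longrightarrow> gapok d B \<Longrightarrow>
     ((\<Sum>a\<in>B. f a) \<le> 0 \<and> 0 \<le> (\<Sum>a\<in>{1..k}. f a)) \<or> (0 \<le> (\<Sum>a\<in>B. f a) \<and> (\<Sum>a\<in>{1..k}. f a) \<le> 0)
     \<Longrightarrow> \<exists>A. A \<subseteq> {1..n} \<and> finite A \<and> card A = k \<and> gapok d A \<and> (\<Sum>a\<in>A. f a) = 0"
proof (induction "\<Sum>B" arbitrary: B rule: less_induct)
  case less
  show ?case
  proof (cases "(\<Sum>a\<in>B. f a) = 0")
    case True show ?thesis
      apply (rule exI[of _ B]) using less.prems(1-4) True by simp
  next
    case nz: False
    show ?thesis
    proof (cases "B = {1..k}")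
      case True
      have "(\<Sum>a\<in>B. f a) = (\<Sum>a\<in>{1..k}. f a)" using True by simp
      then have False using less.prems(5) nz by linarith
      then show ?thesis ..
    next
      case False
      obtain c M where cM: "M \<in> B" "c \<notin> B" "1 \<le> c" "c < M" "gapok d (insert c (B - {M}))"
        using path_step[OF less.prems(1,2,3) assms(1) less.prems(4) False assms(3)] by blast
      define B' where "B' = insert c (B - {M})"
      have Mn: "M \<le> n" "1 \<le> M" using cM less.prems(2) by auto
      have fB': "finite B'" using less.prems(1) B'_def by simp
      have sB': "B' \<subseteq> {1..n}" using less.prems(2) B'_def cM Mn by auto
      have cB': "card B' = k" using less.prems(1,3) cM B'_def assms(1) by (simp add: card_Diff_singleton)
      have sumB: "\<Sum>B = M + \<Sum>(B - {M})" using less.prems(1) cM(1) by (simp add: sum.remove)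
      have "\<Sum>B' = c + \<Sum>(B - {M})" using less.prems(1) cM(2) B'_def by simp
      then have lt: "\<Sum>B' < \<Sum>B" using sumB cM(4) by simp
      have sf: "(\<Sum>a\<in>B. f a) = f M + (\<Sum>a\<in>B - {M}. f a)" using less.prems(1) cM(1) by (simp add: sum.remove)
      have sf': "(\<Sum>a\<in>B'. f a) = f c + (\<Sum>a\<in>B - {M}. f a)" using less.prems(1) cM(2) B'_def by simp
      have fM: "f M = -1 \<or> f M = 1" using assms(4) Mn by auto
      have fc: "f c = -1 \<or> f c = 1" using assms(4) cM Mn by auto
      have pB: "\<forall>a\<in>B. f a \<in> {-1, 1}" using assms(4) less.prems(2) by auto
      have pB': "\<forall>a\<in>B'. f a \<in> {-1, 1}" using assms(4) sB' by auto
      have e1: "even (\<Sum>a\<in>B. f a)" using sum_parity[OF less.prems(1) pB] less.prems(3) assms(2) by simp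
      have e2: "even (\<Sum>a\<in>B'. f a)" using sum_parity[OF fB' pB'] cB' assms(2) by simp
      have cond: "((\<Sum>a\<in>B'. f a) \<le> 0 \<and> 0 \<le> (\<Sum>a\<in>{1..k}. f a)) \<or> (0 \<le> (\<Sum>a\<in>B'. f a) \<and> (\<Sum>a\<in>{1..k}. f a) \<le> 0)"
      proof -
        have "(\<Sum>a\<in>B. f a) \<le> -2 \<or> (\<Sum>a\<in>B. f a) \<ge> 2" using e1 nz by presburger
        moreover have "\<bar>(\<Sum>a\<in>B'. f a) - (\<Sum>a\<in>B. f a)\<bar> \<le> 2" using sf sf' fM fc by auto
        ultimately show ?thesis using less.prems(5) by linarith
      qed
      show ?thesis using less.hyps[OF _ fB' sB' cB' _ cond] lt cM(5) B'_def by blast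
    qed
  qed
qed



lemma neg_block:
  fixes Q :: "nat \<Rightarrow> bool" and n d m :: nat
  assumes d1: "d \<ge> 1" and m2: "m \<ge> 2"
    and cnt: "n \<le> (d+1) * card {i\<in>{1..n}. Q i}"
    and big: "\<forall>q. 2*q \<le> m - 1 \<longrightarrow> (d+1)*((q+1)*(m-1)) < n"
  shows "\<exists>S. finite S \<and> S \<subseteq> {1..n} \<and> S \<noteq> {} \<and> gapok d S \<and> card S \<le> 2*m \<and> m \<le> card (S \<inter> Collect Q)"
proof -
  define N where "N = {i\<in>{1..n}. Q i}"
  define c where "c = card N"
  have fN: "finite N" by (simp add: N_def)
  obtain p where p: "sorted_wrt (<) p" "set p = N" "length p = c"
    using finite_set_strict_sorted[OF fN] c_def by blast
  have n1: "(d+1)*(m-1) < n" using big[rule_format, of 0] by simp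
  have cnt': "n \<le> (d+1) * c" using cnt N_def c_def by simp
  have c1: "c \<ge> 1"
  proof (rule ccontr)
    assume "\<not> c \<ge> 1" then have "c = 0" by simp
    then show False using cnt' n1 by simp
  qed
  have pmono: "\<And>i j. i < j \<Longrightarrow> j < c \<Longrightarrow> p!i < p!j"
    using sorted_wrt_nth_less[OF p(1)] p(3) by simp
  have prange: "\<And>i. i < c \<Longrightarrow> 1 \<le> p!i \<and> p!i \<le> n \<and> Q (p!i)"
  proof -
    fix i assume "i < c"
    then have "p!i \<in> N" using p(2,3) nth_mem by metis
    then show "1 \<le> p!i \<and> p!i \<le> n \<and> Q (p!i)" unfolding N_def by simp
  qed
  define t where "t i = (p!(i+1) - p!i - 1) div d" for i
  have tb1: "p!i + d*t i + 1 \<le> p!(i+1)" if "i+1 < c" for i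
  proof -
    have "p!i < p!(i+1)" using pmono that by simp
    moreover have "d * t i \<le> p!(i+1) - p!i - 1" unfolding t_def by (rule times_div_less_eq_dividend)
    ultimately show ?thesis by linarith
  qed
  have tb2: "p!(i+1) \<le> p!i + d*t i + d" if "i+1 < c" for i
  proof -
    define g where "g = p!(i+1) - p!i - 1"
    have "p!i < p!(i+1)" using pmono that by simp
    then have pg: "p!(i+1) = p!i + 1 + g" unfolding g_def by simp
    have "g = d * (g div d) + g mod d" by simp
    moreover have "g mod d < d" using d1 by simp
    moreover have "d * t i = d * (g div d)" unfolding t_def g_def by simp
    ultimately have "g < d * t i + d" by linarith
    then show ?thesis using pg by linarith
  qed
  show ?thesis
  proof (cases "\<exists>j. j + m \<le> c \<and> (\<Sum>i\<in>{j..<j+m-1}. t i) \<le> m")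
    case True
    then obtain j where j: "j + m \<le> c" "(\<Sum>i\<in>{j..<j+m-1}. t i) \<le> m" by blast
    define S0 where "S0 = (\<Union>i\<in>{j..<j+m-1}. (\<lambda>l. p!i + d*l) ` {0..t i})"
    define S where "S = insert (p!(j+m-1)) S0"
    have memS0: "x \<in> S0 \<longleftrightarrow> (\<exists>i l. j \<le> i \<and> i < j+m-1 \<and> l \<le> t i \<and> x = p!i + d*l)" for x
      unfolding S0_def UN_iff image_iff Bex_def atLeastLessThan_iff atLeastAtMost_iff by blast
    have fS0: "finite S0" unfolding S0_def by simp
    have fS: "finite S" unfolding S_def using fS0 by simp
    have elb: "p!i + d*l < p!(i+1) \<and> p!(i+1) \<le> p!(j+m-1) \<and> 1 \<le> p!i"
      if "j \<le> i" "i < j+m-1" "l \<le> t i" for i l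
    proof -
      have ic: "i + 1 < c" using that j(1) m2 by linarith
      have "d*l \<le> d*t i" using that(3) by simp
      then have a: "p!i + d*l < p!(i+1)" using tb1[OF ic] by linarith
      have "p!(i+1) \<le> p!(j+m-1)"
      proof (cases "i+1 = j+m-1")
        case True then show ?thesis by simp
      next
        case False then have "i+1 < j+m-1" using that by simp
        moreover have "j+m-1 < c" using j(1) m2 by linarith
        ultimately show ?thesis using pmono[of "i+1" "j+m-1"] by simp
      qed
      then show ?thesis using a prange[of i] ic by simp
    qed
    have lastc: "j+m-1 < c" using j(1) m2 by simp
    have S0below: "y < p!(j+m-1)" if yS0: "y \<in> S0" for y
    proof -
      obtain i l where il: "j \<le> i" "i < j+m-1" "l \<le> t i" "y = p!i + d*l" using yS0 unfolding memS0 by blast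
      show ?thesis using elb[OF il(1-3)] il(4) by linarith
    qed
    have Ssub: "S \<subseteq> {1..n}"
    proof
      fix x assume "x \<in> S"
      then have "x = p!(j+m-1) \<or> x \<in> S0" unfolding S_def by simp
      then show "x \<in> {1..n}"
      proof
        assume "x = p!(j+m-1)" then show ?thesis using prange[OF lastc] by simp
      next
        assume "x \<in> S0"
        then obtain i l where il: "j \<le> i" "i < j+m-1" "l \<le> t i" "x = p!i + d*l" unfolding memS0 by blast
        have "x < p!(j+m-1)" using \<open>x \<in> S0\<close> S0below by simp
        moreover have "p!(j+m-1) \<le> n" using prange[OF lastc] by simp
        moreover have "1 \<le> x" using elb[OF il(1-3)] il(4) by simp
        ultimately show ?thesis by simp
      qed
    qed
    have cardS: "card S \<le> 2*m"
    proof -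
      have "card S \<le> Suc (card S0)" unfolding S_def using fS0 by (simp add: card_insert_if)
      moreover have "card S0 \<le> (\<Sum>i\<in>{j..<j+m-1}. card ((\<lambda>l. p!i + d*l) ` {0..t i}))"
        unfolding S0_def by (rule card_UN_le) simp
      moreover have "(\<Sum>i\<in>{j..<j+m-1}. card ((\<lambda>l. p!i + d*l) ` {0..t i})) \<le> (\<Sum>i\<in>{j..<j+m-1}. t i + 1)"
      proof (rule sum_mono)
        fix i show "card ((\<lambda>l. p!i + d*l) ` {0..t i}) \<le> t i + 1"
          using card_image_le[of "{0..t i}" "\<lambda>l. p!i + d*l"] by simp
      qed
      moreover have "(\<Sum>i\<in>{j..<j+m-1}. t i + 1) = (\<Sum>i\<in>{j..<j+m-1}. t i) + (\<Sum>i\<in>{j..<j+m-1}. (1::nat))"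
        by (rule sum.distrib)
      moreover have "(\<Sum>i\<in>{j..<j+m-1}. (1::nat)) = m - 1" using m2 by simp
      ultimately show ?thesis using j(2) m2 by linarith
    qed
    have injp: "inj_on (\<lambda>i. p!i) {j..<j+m}"
    proof (rule inj_onI)
      fix a b assume ab: "a \<in> {j..<j+m}" "b \<in> {j..<j+m}" "p!a = p!b"
      have "a < c" "b < c" using ab j(1) by auto
      show "a = b"
      proof (rule ccontr)
        assume "a \<noteq> b"
        then have "a < b \<or> b < a" by linarith
        then show False
        proof
          assume "a < b" then have "p!a < p!b" using pmono \<open>b < c\<close> by blast
          then show False using ab(3) by simp
        next
          assume "b < a" then have "p!b < p!a" using pmono \<open>a < c\<close> by blast
          then show False using ab(3) by simp
        qed
      qed
    qed
    have imsub: "(\<lambda>i. p!i) ` {j..<j+m} \<subseteq> S \<inter> Collect Q"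
    proof
      fix x assume "x \<in> (\<lambda>i. p!i) ` {j..<j+m}"
      then obtain i where i: "i \<in> {j..<j+m}" "x = p!i" by blast
      have ic: "i < c" using i j(1) by simp
      have "x \<in> S"
      proof (cases "i = j+m-1")
        case True then show ?thesis using i unfolding S_def by simp
      next
        case False
        then have "i < j+m-1" using i by auto
        then have "x \<in> S0" unfolding memS0 using i by (intro exI[of _ i] exI[of _ 0]) simp
        then show ?thesis unfolding S_def by simp
      qed
      then show "x \<in> S \<inter> Collect Q" using prange[OF ic] i by simp
    qed
    have cardQ: "m \<le> card (S \<inter> Collect Q)"
    proof -
      have "card ((\<lambda>i. p!i) ` {j..<j+m}) = m" using card_image[OF injp] by simp
      moreover have "card ((\<lambda>i. p!i) ` {j..<j+m}) \<le> card (S \<inter> Collect Q)"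
        using card_mono[OF _ imsub] fS by simp
      ultimately show ?thesis by simp
    qed
    have gS: "gapok d S"
      unfolding gapok_def
    proof (intro ballI impI)
      fix x assume xS: "x \<in> S" and ex: "\<exists>y\<in>S. x < y"
      have xS0: "x \<in> S0"
      proof (rule ccontr)
        assume "x \<notin> S0"
        then have "x = p!(j+m-1)" using xS unfolding S_def by simp
        then obtain y where "y \<in> S" "p!(j+m-1) < y" using ex by blast
        then have "y \<in> S0" using S_def by auto
        then show False using S0below \<open>p!(j+m-1) < y\<close> by fastforce
      qed
      then obtain i l where il: "j \<le> i" "i < j+m-1" "l \<le> t i" "x = p!i + d*l" unfolding memS0 by blast
      have ic: "i + 1 < c" using il j(1) m2 by linarith
      show "\<exists>y\<in>S. x < y \<and> y \<le> x + d"
      proof (cases "l < t i")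
        case True
        have "p!i + d*(l+1) \<in> S0" unfolding memS0 using il True by (intro exI[of _ i] exI[of _ "l+1"]) simp
        then have "p!i + d*(l+1) \<in> S" unfolding S_def by simp
        then show ?thesis using il(4) d1 by (intro bexI[of _ "p!i + d*(l+1)"]) (auto simp: algebra_simps)
      next
        case False
        then have lt: "l = t i" using il by simp
        have yS: "p!(i+1) \<in> S"
        proof (cases "i+1 = j+m-1")
          case True then show ?thesis unfolding S_def by simp
        next
          case False
          then have "i+1 < j+m-1" using il by simp
          then have "p!(i+1) \<in> S0" unfolding memS0 using il by (intro exI[of _ "i+1"] exI[of _ 0]) simp
          then show ?thesis unfolding S_def by simp
        qed
        show ?thesis using yS tb1[OF ic] tb2[OF ic] il(4) lt by (intro bexI[of _ "p!(i+1)"]) auto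
      qed
    qed
    show ?thesis using fS Ssub gS cardS cardQ unfolding S_def by blast
  next
    case False
    have win: "m+1 \<le> (\<Sum>i\<in>{j..<j+m-1}. t i)" if "j + m \<le> c" for j
    proof -
      have "\<not> (\<Sum>i\<in>{j..<j+m-1}. t i) \<le> m" using False that by blast
      then show ?thesis by simp
    qed
    have tele: "p!0 + l + d*(\<Sum>i<l. t i) \<le> p!l" if "l < c" for l
      using that
    proof (induction l)
      case 0 then show ?case by simp
    next
      case (Suc l)
      have "p!0 + l + d*(\<Sum>i<l. t i) \<le> p!l" using Suc by simp
      moreover have "p!l + d*t l + 1 \<le> p!(l+1)" using tb1 Suc.prems by simp
      ultimately show ?case by (simp add: distrib_left)
    qed
    define w where "w = m - 1"
    define q where "q = (c-1) div w"
    define r where "r = (c-1) mod w"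
    have w1: "w \<ge> 1" using m2 w_def by simp
    have cq: "c - 1 = q*w + r" unfolding q_def r_def by simp
    have rw: "r < w" unfolding r_def using w1 by simp
    have blocks: "q'*(m+1) \<le> (\<Sum>i<q'*w. t i)" if "q' \<le> q" for q'
      using that
    proof (induction q')
      case 0 then show ?case by simp
    next
      case (Suc q')
      have IH: "q'*(m+1) \<le> (\<Sum>i<q'*w. t i)" using Suc by simp
      have "q'*w + m \<le> c"
      proof -
        have "Suc q' * w \<le> q * w" using Suc.prems mult_le_mono1[of "Suc q'" q w] by simp
        then show ?thesis using cq w_def m2 by simp
      qed
      then have W: "m+1 \<le> (\<Sum>i\<in>{q'*w..<q'*w+m-1}. t i)" by (rule win)
      have e: "q'*w+m-1 = Suc q' * w" using w_def m2 by simp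
      have "(\<Sum>i<Suc q' * w. t i) = (\<Sum>i\<in>{0..<q'*w}. t i) + (\<Sum>i\<in>{q'*w..<Suc q' * w}. t i)"
        using sum.atLeastLessThan_concat[of 0 "q'*w" "Suc q' * w" t] by (simp add: lessThan_atLeast0)
      also have "\<dots> = (\<Sum>i<q'*w. t i) + (\<Sum>i\<in>{q'*w..<q'*w+m-1}. t i)" using e by (simp add: lessThan_atLeast0)
      finally show ?case using IH W by simp
    qed
    have qwc: "q*w \<le> c - 1" using cq by simp
    have s1: "q*(m+1) \<le> (\<Sum>i<c-1. t i)"
    proof -
      have "(\<Sum>i<q*w. t i) \<le> (\<Sum>i<c-1. t i)" using qwc by (intro sum_mono2) auto
      then show ?thesis using blocks[of q] by simp
    qed
    have "p!0 + (c-1) + d*(\<Sum>i<c-1. t i) \<le> p!(c-1)" using tele[of "c-1"] c1 by simp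
    moreover have "1 \<le> p!0" "p!(c-1) \<le> n" using prange c1 by auto
    moreover have "d*(q*(m+1)) \<le> d*(\<Sum>i<c-1. t i)" using s1 by simp
    ultimately have "c + d*(q*(m+1)) \<le> n" using c1 by linarith
    then have "c + d*(q*(m+1)) \<le> d*c + c" using cnt' by (simp add: algebra_simps)
    then have "d*(q*(m+1)) \<le> d*c" by simp
    then have qc: "q*(m+1) \<le> c" using d1 by simp
    have cc: "c = q*w + r + 1" using cq c1 by simp
    have "m + 1 = w + 2" using w_def m2 by simp
    then have "q*w + 2*q \<le> q*w + r + 1" using qc cc by (simp add: algebra_simps)
    then have q2: "2*q \<le> m - 1" using rw w_def by simp
    have qw: "(q+1)*w = q*w + w" by simp
    have "c \<le> (q+1)*w" using cc rw qw by linarith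
    then have "c \<le> (q+1)*(m-1)" using w_def by simp
    then have "(d+1)*c \<le> (d+1)*((q+1)*(m-1))" by (rule mult_le_mono2)
    then have "n \<le> (d+1)*((q+1)*(m-1))" using cnt' by linarith
    then show ?thesis using big[rule_format, OF q2] by linarith
  qed
qed



lemma sign_le:
  fixes f :: "nat \<Rightarrow> int"
  assumes "finite A" "\<forall>a\<in>A. f a \<in> {-1, 1}" "card A = 2*m" "m \<le> card {a\<in>A. f a = v}" "v = -1 \<or> v = 1"
  shows "(v = -1 \<longrightarrow> (\<Sum>a\<in>A. f a) \<le> 0) \<and> (v = 1 \<longrightarrow> (\<Sum>a\<in>A. f a) \<ge> 0)"
  using sum_count[OF assms(1,2)] assms(3,4,5) by auto

theorem theorem3p2:
  fixes k d n s :: nat and f :: "nat \<Rightarrow> int"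
  assumes "k \<ge> 6" and "even k" and "d \<ge> 2" and "n \<ge> 1"
    and "s \<in> {0, 1}" and "s mod 2 = ((k - 2) div 2) mod 2"
    and "real n \<ge> (real d + 1) / 8 *
           (real k ^ 2 - 2 * real s * real k + 4 * real s - 4) + 1"
    and "\<forall>i\<in>{1..n}. f i \<in> {-1, 1}"
    and "\<bar>real_of_int (\<Sum>i\<in>{1..n}. f i)\<bar> \<le> (real d - 1) / (real d + 1) * real n"
  shows "\<exists>A. A \<subseteq> {1..n} \<and> dk_block d k A \<and> (\<Sum>a\<in>A. f a) = 0"
proof -
  obtain m where km: "k = 2*m" using assms(2) by (auto elim: evenE)
  have m3: "m \<ge> 3" using km assms(1) by simp
  have d1: "d \<ge> 1" using assms(3) by simp
  define Np where "Np = card {i\<in>{1..n}. f i = 1}"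
  define Nn where "Nn = card {i\<in>{1..n}. f i = -1}"
  have sc: "(\<Sum>i\<in>{1..n}. f i) = int Np - int Nn" "n = Np + Nn"
    using sum_count[of "{1..n}" f] assms(8) Np_def Nn_def by auto
  define D where "D = real d"
  have D1: "D \<ge> 2" using assms(3) D_def by simp
  have ab: "\<bar>real Np - real Nn\<bar> \<le> (D - 1) / (D + 1) * (real Np + real Nn)"
  proof -
    have r: "real_of_int (\<Sum>i\<in>{1..n}. f i) = real Np - real Nn" using sc(1) by simp
    have "real n = real Np + real Nn" using sc(2) by simp
    then show ?thesis using assms(9) unfolding r D_def by simp
  qed
  have ab2: "(D + 1) * \<bar>real Np - real Nn\<bar> \<le> (D - 1) * (real Np + real Nn)"
  proof -
    have "(D + 1) * \<bar>real Np - real Nn\<bar> \<le> (D + 1) * ((D - 1) / (D + 1) * (real Np + real Nn))"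
      using ab D1 by (intro mult_left_mono) auto
    also have "\<dots> = (D - 1) * (real Np + real Nn)" using D1 by (simp add: field_simps)
    finally show ?thesis .
  qed
  have rNn: "real n \<le> (D + 1) * real Nn"
  proof -
    have "(D + 1) * (real Np - real Nn) \<le> (D - 1) * (real Np + real Nn)"
      using ab2 D1 by (smt (verit) abs_ge_self mult_left_mono)
    then have "D*real Np + real Np - D*real Nn - real Nn \<le> D*real Np + D*real Nn - real Np - real Nn"
      by (simp add: algebra_simps)
    then show ?thesis using sc by (simp add: algebra_simps)
  qed
  have rNp: "real n \<le> (D + 1) * real Np"
  proof -
    have "(D + 1) * (real Nn - real Np) \<le> (D - 1) * (real Np + real Nn)"
      using ab2 D1 by (smt (verit) abs_ge_minus_self abs_minus_commute mult_left_mono)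
    then have "D*real Nn + real Nn - D*real Np - real Np \<le> D*real Np + D*real Nn - real Np - real Nn"
      by (simp add: algebra_simps)
    then show ?thesis using sc by (simp add: algebra_simps)
  qed
  have cNn: "n \<le> (d+1) * card {i\<in>{1..n}. f i = -1}"
  proof -
    have "real n \<le> real ((d+1) * Nn)" using rNn D_def by (simp add: algebra_simps)
    then have "n \<le> (d+1) * Nn" by (simp only: of_nat_le_iff)
    then show ?thesis using Nn_def by simp
  qed
  have cNp: "n \<le> (d+1) * card {i\<in>{1..n}. f i = 1}"
  proof -
    have "real n \<le> real ((d+1) * Np)" using rNp D_def by (simp add: algebra_simps)
    then have "n \<le> (d+1) * Np" by (simp only: of_nat_le_iff)
    then show ?thesis using Np_def by simp
  qed
  define E where "E = real k ^ 2 - 2 * real s * real k + 4 * real s - 4"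
  have Ee: "E = 4 * (real m - 1) * (real m + 1 - real s)"
  proof -
    have rk: "real k = 2 * real m" using km by simp
    show ?thesis unfolding E_def rk power2_eq_square by algebra
  qed
  have sm: "s = (m - 1) mod 2"
  proof -
    have "k - 2 = 2*(m-1)" using km by (simp add: right_diff_distrib')
    then have e: "(k - 2) div 2 = m - 1" by simp
    have "s = 0 \<or> s = 1" using assms(5) by simp
    then have "s mod 2 = s" by auto
    then show ?thesis using assms(6) e by simp
  qed
  have big: "\<forall>q. 2*q \<le> m - 1 \<longrightarrow> (d+1)*((q+1)*(m-1)) < n"
  proof (intro allI impI)
    fix q assume q: "2*q \<le> m - 1"
    have q2: "2*(q+1) + s \<le> m + 1"
    proof -
      define h where "h = (m-1) div 2"
      have mh: "m - 1 = 2*h + s" using sm h_def by simp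
      have s1: "s \<le> 1" using sm by simp
      have "q \<le> h" using q mh s1 by arith
      then show ?thesis using mh m3 by arith
    qed
    have "real (2*(q+1)) \<le> real m + 1 - real s" using q2 by linarith
    then have "(real m - 1) * real (2*(q+1)) \<le> (real m - 1) * (real m + 1 - real s)"
      using m3 by (intro mult_left_mono) auto
    moreover have r1: "real ((q+1)*(m-1)) = (real q + 1)*(real m - 1)"
    proof -
      have "real (m-1) = real m - 1" using m3 by (simp add: of_nat_diff)
      moreover have "real (q+1) = real q + 1" by simp
      ultimately show ?thesis by (simp only: of_nat_mult)
    qed
    moreover have "8 * ((real q + 1)*(real m - 1)) = 4 * ((real m - 1) * real (2*(q+1)))" by (simp add: algebra_simps)
    ultimately have X: "8 * real ((q+1)*(m-1)) \<le> E" using Ee by (simp only:)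
    have "(D + 1) * real ((q+1)*(m-1)) = (D + 1) / 8 * (8 * real ((q+1)*(m-1)))" by simp
    also have "\<dots> \<le> (D + 1) / 8 * E" using X D1 by (intro mult_left_mono) auto
    finally have "(D + 1) * real ((q+1)*(m-1)) \<le> (D + 1) / 8 * E" .
    moreover have h7: "(D+1)/8 * E + 1 \<le> real n" using assms(7) unfolding E_def D_def .
    ultimately have "(D + 1) * real ((q+1)*(m-1)) < real n" by linarith
    then have "real ((d+1)*((q+1)*(m-1))) < real n" unfolding D_def by (simp only: of_nat_mult of_nat_add of_nat_1)
    then show "(d+1)*((q+1)*(m-1)) < n" by linarith
  qed
  have kn: "k \<le> n"
  proof -
    have "(d+1)*(m-1) < n" using big[rule_format, of 0] by simp
    moreover have "3*(m-1) \<le> (d+1)*(m-1)" using d1 assms(3) by simp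
    moreover have "3*(m-1) = 3*m - 3" by simp
    ultimately show ?thesis using km m3 by linarith
  qed
  have pm: "\<forall>i\<in>{1..n}. f i \<in> {-1, 1}" using assms(8) .
  have m2: "m \<ge> 2" using m3 by simp
  obtain S1 where S1: "finite S1" "S1 \<subseteq> {1..n}" "S1 \<noteq> {}" "gapok d S1" "card S1 \<le> 2*m"
      "m \<le> card (S1 \<inter> Collect (\<lambda>i. f i = -1))"
    using neg_block[OF d1 m2 cNn big] by blast
  obtain S2 where S2: "finite S2" "S2 \<subseteq> {1..n}" "S2 \<noteq> {}" "gapok d S2" "card S2 \<le> 2*m"
      "m \<le> card (S2 \<inter> Collect (\<lambda>i. f i = 1))"
    using neg_block[OF d1 m2 cNp big] by blast
  obtain B1 where B1: "S1 \<subseteq> B1" "B1 \<subseteq> {1..n}" "gapok d B1" "card B1 = card S1 + (k - card S1)"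
    using pad[OF S1(1,3,2,4) d1, of "k - card S1"] kn km S1(5) by auto
  obtain B2 where B2: "S2 \<subseteq> B2" "B2 \<subseteq> {1..n}" "gapok d B2" "card B2 = card S2 + (k - card S2)"
    using pad[OF S2(1,3,2,4) d1, of "k - card S2"] kn km S2(5) by auto
  have fB1: "finite B1" using B1(2) finite_subset by blast
  have fB2: "finite B2" using B2(2) finite_subset by blast
  have cB1: "card B1 = k" using B1(4) S1(5) km by simp
  have cB2: "card B2 = k" using B2(4) S2(5) km by simp
  have pB1: "\<forall>a\<in>B1. f a \<in> {-1, 1}" using pm B1(2) by auto
  have pB2: "\<forall>a\<in>B2. f a \<in> {-1, 1}" using pm B2(2) by auto
  have "S1 \<inter> Collect (\<lambda>i. f i = -1) \<subseteq> {a\<in>B1. f a = -1}" using B1(1) by auto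
  then have "card (S1 \<inter> Collect (\<lambda>i. f i = -1)) \<le> card {a\<in>B1. f a = -1}"
    by (intro card_mono) (simp add: fB1)
  then have "m \<le> card {a\<in>B1. f a = -1}" using S1(6) by linarith
  then have s1: "(\<Sum>a\<in>B1. f a) \<le> 0" using sign_le[OF fB1 pB1, of m "-1"] cB1 km by simp
  have "S2 \<inter> Collect (\<lambda>i. f i = 1) \<subseteq> {a\<in>B2. f a = 1}" using B2(1) by auto
  then have "card (S2 \<inter> Collect (\<lambda>i. f i = 1)) \<le> card {a\<in>B2. f a = 1}"
    by (intro card_mono) (simp add: fB2)
  then have "m \<le> card {a\<in>B2. f a = 1}" using S2(6) by linarith
  then have s2: "(\<Sum>a\<in>B2. f a) \<ge> 0" using sign_le[OF fB2 pB2, of m 1] cB2 km by simp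
  have k2: "k \<ge> 2" using assms(1) by simp
  obtain A where A: "A \<subseteq> {1..n}" "finite A" "card A = k" "gapok d A" "(\<Sum>a\<in>A. f a) = 0"
  proof (cases "(\<Sum>a\<in>{1..k}. f a) \<ge> 0")
    case True
    have "\<exists>A. A \<subseteq> {1..n} \<and> finite A \<and> card A = k \<and> gapok d A \<and> (\<Sum>a\<in>A. f a) = 0"
      using ivt[OF k2 assms(2) d1 pm kn fB1 B1(2) cB1 B1(3)] s1 True by simp
    then obtain A where "A \<subseteq> {1..n}" "finite A" "card A = k" "gapok d A" "(\<Sum>a\<in>A. f a) = 0" by blast
    then show ?thesis by (rule that)
  next
    case False
    have "\<exists>A. A \<subseteq> {1..n} \<and> finite A \<and> card A = k \<and> gapok d A \<and> (\<Sum>a\<in>A. f a) = 0"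
      using ivt[OF k2 assms(2) d1 pm kn fB2 B2(2) cB2 B2(3)] s2 False by simp
    then obtain A where "A \<subseteq> {1..n}" "finite A" "card A = k" "gapok d A" "(\<Sum>a\<in>A. f a) = 0" by blast
    then show ?thesis by (rule that)
  qed
  have "dk_block d k A" using gapok_dk[OF A(2,4)] A(3) by simp
  then show ?thesis using A by blast
qed


end
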